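(* A descriptive $\mathsf{MS4}$-frame $\mathfrak{G}=(Y,R,E)$ validates $\mathsf{LKur}=\mathsf{MS4}+\Box\forall\Diamond\Box p\to\Diamond\forall p$ if and only if it satisfies the local Kuroda principle: for every $x\in\operatorname{qmax}Y$ there is $y$ with $xE_Ry$ such that $E[y]\subseteq\operatorname{qmax}Y$.
   Context: $\mathsf{MS4}$ is the smallest set of formulas in the classical bimodal language $\mathcal{L}_{\Box\forall}$ containing all classical tautologies, the $\mathsf{S4}$ axioms for $\Box$, the $\mathsf{S5}$ axioms for $\forall$, and $\Box\forall p\to\forall\Box p$, closed under modus ponens, substitution, $\Box$- and $\forall$-necessitation; $\Diamond=\neg\Box\neg$. A descriptive $\mathsf{MS4}$-frame is a triple $(Y,R,E)$ where $Y$ is a Stone space (compact, Hausdorff, zero-dimensional), $R$ is a quasi-order and $E$ an equivalence relation on $Y$, both continuous (i.e., the image $R[x]=\{y:xRy\}$ is closed for each $x$ and $R^{-1}[U]$ is clopen for each clopen $U$; same for $E$), and $xEy$, $yRz$ imply there is $u$ with $xRu$ and $uEz$. Formulas are evaluated under valuations assigning clopen subsets to letters, $\Box$ via $R$, $\forall$ via $E$; validity means truth everywhere under all such valuations. $\operatorname{qmax}Y=\{x: xRy\Rightarrow yRx\}$ is the set of quasi-maximal points; $xE_Ry$ iff $xRy$ and $yRx$. *)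

theory Defs
  imports "HOL-Analysis.Analysis"
begin

datatype fm = Var nat | Bot | Imp fm fm | Box fm | All fm

definition Neg :: "fm \<Rightarrow> fm" where "Neg p = Imp p Bot"
definition Dia :: "fm \<Rightarrow> fm" where "Dia p = Neg (Box (Neg p))"
definition Ex :: "fm \<Rightarrow> fm" where "Ex p = Neg (All (Neg p))"
definition Conj :: "fm \<Rightarrow> fm \<Rightarrow> fm" where "Conj p q = Neg (Imp p (Neg q))"

text \<open>Classical tautologies: formulas true under every Boolean assignment to
  their maximal non-classical subformulas (letters, Box-formulas, All-formulas).\<close>
fun ptv :: "(fm \<Rightarrow> bool) \<Rightarrow> fm \<Rightarrow> bool" where
  "ptv v Bot = False"
| "ptv v (Imp p q) = (ptv v p \<longrightarrow> ptv v q)"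
| "ptv v p = v p"

definition taut :: "fm \<Rightarrow> bool" where "taut p \<longleftrightarrow> (\<forall>v. ptv v p)"

fun subst :: "(nat \<Rightarrow> fm) \<Rightarrow> fm \<Rightarrow> fm" where
  "subst s (Var n) = s n"
| "subst s Bot = Bot"
| "subst s (Imp p q) = Imp (subst s p) (subst s q)"
| "subst s (Box p) = Box (subst s p)"
| "subst s (All p) = All (subst s p)"

abbreviation "pp \<equiv> Var 0"
abbreviation "qq \<equiv> Var 1"

inductive_set MS4_ext :: "fm set \<Rightarrow> fm set" for Ax :: "fm set" where
  tautI: "taut p \<Longrightarrow> p \<in> MS4_ext Ax"
| K_Box: "Imp (Box (Imp pp qq)) (Imp (Box pp) (Box qq)) \<in> MS4_ext Ax"
| T_Box: "Imp (Box pp) pp \<in> MS4_ext Ax"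
| Four_Box: "Imp (Box pp) (Box (Box pp)) \<in> MS4_ext Ax"
| K_All: "Imp (All (Imp pp qq)) (Imp (All pp) (All qq)) \<in> MS4_ext Ax"
| T_All: "Imp (All pp) pp \<in> MS4_ext Ax"
| Five_All: "Imp (Ex pp) (All (Ex pp)) \<in> MS4_ext Ax"
| Left_comm: "Imp (Box (All pp)) (All (Box pp)) \<in> MS4_ext Ax"
| extra: "p \<in> Ax \<Longrightarrow> p \<in> MS4_ext Ax"
| MP: "p \<in> MS4_ext Ax \<Longrightarrow> Imp p q \<in> MS4_ext Ax \<Longrightarrow> q \<in> MS4_ext Ax"
| Subst: "p \<in> MS4_ext Ax \<Longrightarrow> subst s p \<in> MS4_ext Ax"
| NecBox: "p \<in> MS4_ext Ax \<Longrightarrow> Box p \<in> MS4_ext Ax"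
| NecAll: "p \<in> MS4_ext Ax \<Longrightarrow> All p \<in> MS4_ext Ax"

definition MS4 :: "fm set" where "MS4 = MS4_ext {}"

definition Kur_ax :: fm where
  "Kur_ax = Imp (Box (All (Dia (Box pp)))) (Dia (All pp))"

definition LKur :: "fm set" where "LKur = MS4_ext {Kur_ax}"

definition clopenin :: "'a topology \<Rightarrow> 'a set \<Rightarrow> bool" where
  "clopenin T U \<longleftrightarrow> openin T U \<and> closedin T U"

definition zero_dimensional_space :: "'a topology \<Rightarrow> bool" where
  "zero_dimensional_space T \<longleftrightarrow>
     (\<forall>U x. openin T U \<and> x \<in> U \<longrightarrow> (\<exists>C. clopenin T C \<and> x \<in> C \<and> C \<subseteq> U))"

definition stone_space :: "'a topology \<Rightarrow> bool" where
  "stone_space T \<longleftrightarrow> compact_space T \<and> Hausdorff_space T \<and> zero_dimensional_space T"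

definition continuous_rel :: "'a topology \<Rightarrow> 'a rel \<Rightarrow> bool" where
  "continuous_rel T R \<longleftrightarrow>
     (\<forall>x\<in>topspace T. closedin T (R `` {x})) \<and>
     (\<forall>U. clopenin T U \<longrightarrow> clopenin T (R\<inverse> `` U))"

definition descriptive_MS4_frame :: "'a topology \<Rightarrow> 'a rel \<Rightarrow> 'a rel \<Rightarrow> bool" where
  "descriptive_MS4_frame T R E \<longleftrightarrow>
     stone_space T \<and>
     R \<subseteq> topspace T \<times> topspace T \<and> refl_on (topspace T) R \<and> trans R \<and>
     E \<subseteq> topspace T \<times> topspace T \<and> equiv (topspace T) E \<and>
     continuous_rel T R \<and> continuous_rel T E \<and>
     (\<forall>x y z. (x, y) \<in> E \<and> (y, z) \<in> R \<longrightarrow> (\<exists>u. (x, u) \<in> R \<and> (u, z) \<in> E))"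

fun eval :: "'a topology \<Rightarrow> 'a rel \<Rightarrow> 'a rel \<Rightarrow> (nat \<Rightarrow> 'a set) \<Rightarrow> fm \<Rightarrow> 'a set" where
  "eval T R E V (Var n) = V n"
| "eval T R E V Bot = {}"
| "eval T R E V (Imp p q) = (topspace T - eval T R E V p) \<union> eval T R E V q"
| "eval T R E V (Box p) = {x \<in> topspace T. \<forall>y. (x, y) \<in> R \<longrightarrow> y \<in> eval T R E V p}"
| "eval T R E V (All p) = {x \<in> topspace T. \<forall>y. (x, y) \<in> E \<longrightarrow> y \<in> eval T R E V p}"

definition valid_in :: "'a topology \<Rightarrow> 'a rel \<Rightarrow> 'a rel \<Rightarrow> fm \<Rightarrow> bool" where
  "valid_in T R E p \<longleftrightarrow>
     (\<forall>V. (\<forall>n. clopenin T (V n)) \<longrightarrow> eval T R E V p = topspace T)"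

definition validates :: "'a topology \<Rightarrow> 'a rel \<Rightarrow> 'a rel \<Rightarrow> fm set \<Rightarrow> bool" where
  "validates T R E L \<longleftrightarrow> (\<forall>p\<in>L. valid_in T R E p)"

definition qmax :: "'a topology \<Rightarrow> 'a rel \<Rightarrow> 'a set" where
  "qmax T R = {x \<in> topspace T. \<forall>y. (x, y) \<in> R \<longrightarrow> (y, x) \<in> R}"

definition local_Kuroda :: "'a topology \<Rightarrow> 'a rel \<Rightarrow> 'a rel \<Rightarrow> bool" where
  "local_Kuroda T R E \<longleftrightarrow>
     (\<forall>x\<in>qmax T R. \<exists>y. (x, y) \<in> R \<and> (y, x) \<in> R \<and> E `` {y} \<subseteq> qmax T R)"

end

theory Submission
  imports Defs
begin

lemma clopen_diff: "clopenin T A \<Longrightarrow> clopenin T B \<Longrightarrow> clopenin T (A - B)"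
  unfolding clopenin_def by (auto intro: openin_diff closedin_diff)

lemma clopen_Un: "clopenin T A \<Longrightarrow> clopenin T B \<Longrightarrow> clopenin T (A \<union> B)"
  unfolding clopenin_def by auto

lemma clopen_top: "clopenin T (topspace T)"
  unfolding clopenin_def by auto

lemma clopen_empty: "clopenin T {}" unfolding clopenin_def by auto

lemma clopen_sub: "clopenin T A \<Longrightarrow> A \<subseteq> topspace T"
  unfolding clopenin_def by (auto dest: openin_subset)

lemma clopen_box:
  assumes "R \<subseteq> topspace T \<times> topspace T" "continuous_rel T R" "clopenin T A"
  shows "clopenin T {x \<in> topspace T. \<forall>y. (x, y) \<in> R \<longrightarrow> y \<in> A}"
proof -
  have "{x \<in> topspace T. \<forall>y. (x, y) \<in> R \<longrightarrow> y \<in> A} = topspace T - R\<inverse> `` (topspace T - A)"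
    using assms(1) by auto
  moreover have "clopenin T (R\<inverse> `` (topspace T - A))"
    using assms(2,3) clopen_diff[OF clopen_top] unfolding continuous_rel_def by blast
  ultimately show ?thesis using clopen_diff[OF clopen_top] by metis
qed

lemma frame_facts:
  assumes "descriptive_MS4_frame T R E"
  shows frame_R: "R \<subseteq> topspace T \<times> topspace T"
    and frame_E: "E \<subseteq> topspace T \<times> topspace T"
    and frame_reflR: "refl_on (topspace T) R"
    and frame_transR: "trans R"
    and frame_equiv: "equiv (topspace T) E"
    and frame_cR: "continuous_rel T R"
    and frame_cE: "continuous_rel T E"
    and frame_comm: "\<And>x y z. (x, y) \<in> E \<Longrightarrow> (y, z) \<in> R \<Longrightarrow> \<exists>u. (x, u) \<in> R \<and> (u, z) \<in> E"
    and frame_compact: "compact_space T"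
    and frame_zd: "zero_dimensional_space T"
  using assms unfolding descriptive_MS4_frame_def stone_space_def by blast+

lemma eval_clopen:
  assumes F: "descriptive_MS4_frame T R E" and V: "\<And>n. clopenin T (V n)"
  shows "clopenin T (eval T R E V p)"
proof (induction p)
  case (Var n) then show ?case using V by simp
next
  case Bot then show ?case by (simp add: clopen_empty)
next
  case (Imp p q) then show ?case by (simp add: clopen_Un clopen_diff clopen_top)
next
  case (Box p) then show ?case using clopen_box[OF frame_R[OF F] frame_cR[OF F]] by simp
next
  case (All p) then show ?case using clopen_box[OF frame_E[OF F] frame_cE[OF F]] by simp
qed

lemma eval_sub: "(\<And>n. V n \<subseteq> topspace T) \<Longrightarrow> eval T R E V p \<subseteq> topspace T"
  by (induction p) auto

lemma ptv_eval: "x \<in> topspace T \<Longrightarrow> ptv (\<lambda>q. x \<in> eval T R E V q) p = (x \<in> eval T R E V p)"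
  by (induction p) auto

lemma eval_subst: "eval T R E V (subst s p) = eval T R E (\<lambda>n. eval T R E V (s n)) p"
  by (induction p) auto

lemma eval_Neg: "eval T R E V (Neg p) = topspace T - eval T R E V p"
  by (simp add: Neg_def)

lemma eval_Dia: "R \<subseteq> topspace T \<times> topspace T \<Longrightarrow>
   eval T R E V (Dia p) = {x \<in> topspace T. \<exists>y. (x, y) \<in> R \<and> y \<in> eval T R E V p}"
  by (auto simp: Dia_def Neg_def)

lemma eval_Ex: "E \<subseteq> topspace T \<times> topspace T \<Longrightarrow>
   eval T R E V (Ex p) = {x \<in> topspace T. \<exists>y. (x, y) \<in> E \<and> y \<in> eval T R E V p}"
  by (auto simp: Ex_def Neg_def)

lemma valid_intro:
  assumes "\<And>V x. (\<forall>n. clopenin T (V n)) \<Longrightarrow> x \<in> topspace T \<Longrightarrow> x \<in> eval T R E V p"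
  shows "valid_in T R E p"
  unfolding valid_in_def
proof (intro allI impI)
  fix V :: "nat \<Rightarrow> 'a set" assume V: "\<forall>n. clopenin T (V n)"
  hence "eval T R E V p \<subseteq> topspace T" using eval_sub clopen_sub by metis
  with assms V show "eval T R E V p = topspace T" by blast
qed

lemma validD: "valid_in T R E p \<Longrightarrow> \<forall>n. clopenin T (V n) \<Longrightarrow> x \<in> topspace T \<Longrightarrow> x \<in> eval T R E V p"
  unfolding valid_in_def by blast

lemma sound:
  assumes F: "descriptive_MS4_frame T R E" and Ax: "\<And>q. q \<in> Ax \<Longrightarrow> valid_in T R E q"
    and p: "p \<in> MS4_ext Ax"
  shows "valid_in T R E p"
  using p
proof (induction rule: MS4_ext.induct)
  have Rs: "R \<subseteq> topspace T \<times> topspace T" and Es: "E \<subseteq> topspace T \<times> topspace T"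
    using frame_R[OF F] frame_E[OF F] .
  have reflR: "\<And>x. x \<in> topspace T \<Longrightarrow> (x, x) \<in> R"
    using frame_reflR[OF F] by (simp add: refl_onD)
  have transR: "\<And>x y z. (x, y) \<in> R \<Longrightarrow> (y, z) \<in> R \<Longrightarrow> (x, z) \<in> R"
    using frame_transR[OF F] by (meson transD)
  have reflE: "\<And>x. x \<in> topspace T \<Longrightarrow> (x, x) \<in> E"
    using frame_equiv[OF F] by (meson equiv_def refl_onD)
  have symE: "\<And>x y. (x, y) \<in> E \<Longrightarrow> (y, x) \<in> E"
    using frame_equiv[OF F] by (meson equiv_def symD)
  have transE: "\<And>x y z. (x, y) \<in> E \<Longrightarrow> (y, z) \<in> E \<Longrightarrow> (x, z) \<in> E"
    using frame_equiv[OF F] by (meson equiv_def transD)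
  {
    case (tautI p)
    show ?case
      by (rule valid_intro) (metis ptv_eval tautI taut_def)
  next
    case K_Box show ?case by (rule valid_intro) (use Rs Es in auto)
  next
    case T_Box show ?case by (rule valid_intro) (use Rs Es in \<open>auto intro: reflR\<close>)
  next
    case Four_Box show ?case by (rule valid_intro) (use Rs Es in \<open>auto intro: transR\<close>)
  next
    case K_All show ?case by (rule valid_intro) (use Rs Es in auto)
  next
    case T_All show ?case by (rule valid_intro) (use Rs Es in \<open>auto intro: reflE\<close>)
  next
    case Five_All show ?case
      by (rule valid_intro) (use Rs Es in \<open>auto simp: eval_Ex[OF Es] intro: transE[OF symE]\<close>)
  next
    case Left_comm show ?case
      by (rule valid_intro) (use Rs Es in \<open>auto dest: frame_comm[OF F]\<close>)
  next
    case (extra p) then show ?case using Ax by blast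
  next
    case (MP p q) show ?case
    proof (rule valid_intro)
      fix V :: "nat \<Rightarrow> 'a set" and x assume V: "\<forall>n. clopenin T (V n)" and x: "x \<in> topspace T"
      have "x \<in> eval T R E V p" using validD[OF MP.IH(1) V x] .
      moreover have "x \<in> eval T R E V (Imp p q)" using validD[OF MP.IH(2) V x] .
      ultimately show "x \<in> eval T R E V q" by simp
    qed
  next
    case (Subst p s) show ?case
    proof (rule valid_intro)
      fix V :: "nat \<Rightarrow> 'a set" and x assume V: "\<forall>n. clopenin T (V n)" and x: "x \<in> topspace T"
      have V': "\<forall>n. clopenin T (eval T R E V (s n))" using eval_clopen[OF F] V by blast
      show "x \<in> eval T R E V (subst s p)"
        unfolding eval_subst by (rule validD[OF Subst.IH V' x])
    qed
  next
    case (NecBox p) show ?case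
    proof (rule valid_intro)
      fix V :: "nat \<Rightarrow> 'a set" and x assume V: "\<forall>n. clopenin T (V n)" and x: "x \<in> topspace T"
      then show "x \<in> eval T R E V (Box p)" using x Rs validD[OF NecBox.IH V] by auto
    qed
  next
    case (NecAll p) show ?case
    proof (rule valid_intro)
      fix V :: "nat \<Rightarrow> 'a set" and x assume V: "\<forall>n. clopenin T (V n)" and x: "x \<in> topspace T"
      then show "x \<in> eval T R E V (All p)" using x Es validD[OF NecAll.IH V] by auto
    qed
  }
qed

lemma finite_chain_min:
  assumes "finite F" "F \<noteq> {}" "\<forall>a\<in>F. \<forall>b\<in>F. a \<subseteq> b \<or> b \<subseteq> a"
  shows "\<exists>m\<in>F. \<forall>a\<in>F. m \<subseteq> (a::'a set)"
  using assms
proof (induction F rule: finite_ne_induct)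
  case (singleton x) then show ?case by auto
next
  case (insert x F)
  then obtain m where m: "m \<in> F" "\<forall>a\<in>F. m \<subseteq> a" by auto
  show ?case
  proof (cases "x \<subseteq> m")
    case True then show ?thesis using m by blast
  next
    case False
    then have "m \<subseteq> x" using insert.prems m by blast
    then show ?thesis using m by blast
  qed
qed

lemma fine_esakia:
  assumes F: "descriptive_MS4_frame T R E" and x: "x \<in> topspace T"
  shows "\<exists>m. (x, m) \<in> R \<and> m \<in> qmax T R"
proof -
  have Rs: "R \<subseteq> topspace T \<times> topspace T" using frame_R[OF F] .
  have reflR: "\<And>x. x \<in> topspace T \<Longrightarrow> (x, x) \<in> R"
    using frame_reflR[OF F] by (simp add: refl_onD)
  have transR: "\<And>x y z. (x, y) \<in> R \<Longrightarrow> (y, z) \<in> R \<Longrightarrow> (x, z) \<in> R"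
    using frame_transR[OF F] by (meson transD)
  have cR: "\<And>y. y \<in> topspace T \<Longrightarrow> closedin T (R `` {y})"
    using frame_cR[OF F] unfolding continuous_rel_def by blast
  define \<F> where "\<F> = {A. closedin T A \<and> A \<noteq> {} \<and> A \<subseteq> R `` {x} \<and> R `` A \<subseteq> A}"
  have upF: "R `` {y} \<in> \<F>" if "y \<in> R `` {x}" for y
  proof -
    have y: "y \<in> topspace T" using that Rs by auto
    show ?thesis unfolding \<F>_def
      using cR[OF y] reflR[OF y] that transR by blast
  qed
  have xF: "R `` {x} \<in> \<F>" using upF reflR[OF x] by blast
  define \<A> where "\<A> = (\<lambda>A. topspace T - A) ` \<F>"
  have Fsub: "A \<subseteq> topspace T" if "A \<in> \<F>" for A
    using that closedin_subset unfolding \<F>_def by blast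
  have "\<exists>M\<in>\<A>. \<forall>X\<in>\<A>. M \<subseteq> X \<longrightarrow> X = M"
  proof (rule subset_Zorn_nonempty)
    show "\<A> \<noteq> {}" using xF unfolding \<A>_def by blast
  next
    fix \<C> assume C: "\<C> \<noteq> {}" "subset.chain \<A> \<C>"
    define \<D> where "\<D> = (\<lambda>G. topspace T - G) ` \<C>"
    have CA: "\<C> \<subseteq> \<A>" and Cch: "\<forall>a\<in>\<C>. \<forall>b\<in>\<C>. a \<subseteq> b \<or> b \<subseteq> a"
      using C(2) unfolding subset.chain_def by auto
    have DF: "\<D> \<subseteq> \<F>"
    proof
      fix D assume "D \<in> \<D>"
      then obtain G where G: "G \<in> \<C>" "D = topspace T - G" unfolding \<D>_def by blast
      then obtain A where A: "A \<in> \<F>" "G = topspace T - A" using CA unfolding \<A>_def by blast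
      have "D = A" using G A Fsub[OF A(1)] by blast
      then show "D \<in> \<F>" using A by simp
    qed
    have Dne: "\<D> \<noteq> {}" using C(1) unfolding \<D>_def by blast
    have Dch: "\<forall>a\<in>\<D>. \<forall>b\<in>\<D>. a \<subseteq> b \<or> b \<subseteq> a"
    proof (intro ballI)
      fix a b assume "a \<in> \<D>" "b \<in> \<D>"
      then obtain G1 G2 where "G1 \<in> \<C>" "G2 \<in> \<C>" "a = topspace T - G1" "b = topspace T - G2"
        unfolding \<D>_def by blast
      then show "a \<subseteq> b \<or> b \<subseteq> a" using Cch by blast
    qed
    have "\<Inter>\<D> \<in> \<F>"
    proof -
      have cl: "\<forall>D\<in>\<D>. closedin T D" using DF unfolding \<F>_def by blast
      have "\<Inter>\<D> \<noteq> {}"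
      proof -
        have "\<Inter>\<F>' \<noteq> {}" if fin: "finite \<F>'" and sub: "\<F>' \<subseteq> \<D>" for \<F>'
        proof (cases "\<F>' = {}")
          case True then show ?thesis by simp
        next
          case False
          have "\<forall>a\<in>\<F>'. \<forall>b\<in>\<F>'. a \<subseteq> b \<or> b \<subseteq> a" using Dch sub by blast
          then obtain m where "m \<in> \<F>'" "\<forall>a\<in>\<F>'. m \<subseteq> a"
            using finite_chain_min[OF fin False] by blast
          then have "\<Inter>\<F>' = m" by blast
          moreover have "m \<noteq> {}" using \<open>m \<in> \<F>'\<close> sub DF unfolding \<F>_def by blast
          ultimately show ?thesis by simp
        qed
        then have P: "(\<forall>C\<in>\<D>. closedin T C) \<and> (\<forall>\<F>'. finite \<F>' \<and> \<F>' \<subseteq> \<D> \<longrightarrow> \<Inter>\<F>' \<noteq> {})"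
          using cl by blast
        have "compact_space T" using frame_compact[OF F] .
        then have "\<forall>\<U>. (\<forall>C\<in>\<U>. closedin T C) \<and> (\<forall>\<F>'. finite \<F>' \<and> \<F>' \<subseteq> \<U> \<longrightarrow> \<Inter>\<F>' \<noteq> {}) \<longrightarrow> \<Inter>\<U> \<noteq> {}"
          unfolding compact_space_fip .
        then show ?thesis using P by (elim allE[of _ \<D>]) (rule mp)
      qed
      moreover have "closedin T (\<Inter>\<D>)" using cl Dne by (intro closedin_Inter) auto
      moreover have "\<Inter>\<D> \<subseteq> R `` {x}" using Dne DF unfolding \<F>_def by blast
      moreover have "R `` \<Inter>\<D> \<subseteq> \<Inter>\<D>" using DF unfolding \<F>_def by blast
      ultimately show ?thesis unfolding \<F>_def by blast
    qed
    moreover have "\<Union>\<C> = topspace T - \<Inter>\<D>"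
    proof -
      have "G \<subseteq> topspace T" if "G \<in> \<C>" for G using that CA unfolding \<A>_def by blast
      then show ?thesis unfolding \<D>_def by auto
    qed
    ultimately show "\<Union>\<C> \<in> \<A>" unfolding \<A>_def by blast
  qed
  then obtain M' where M': "M' \<in> \<A>" "\<forall>X\<in>\<A>. M' \<subseteq> X \<longrightarrow> X = M'" by blast
  then obtain M where M1: "M \<in> \<F>" and MM: "M' = topspace T - M" unfolding \<A>_def by blast
  have M2: "\<forall>A\<in>\<F>. A \<subseteq> M \<longrightarrow> A = M"
  proof (intro ballI impI)
    fix A assume A: "A \<in> \<F>" "A \<subseteq> M"
    have "topspace T - A \<in> \<A>" unfolding \<A>_def using A(1) by (rule imageI)
    moreover have "M' \<subseteq> topspace T - A" using MM A(2) by blast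
    ultimately have "topspace T - A = topspace T - M" using M'(2) MM by blast
    then show "A = M" using Fsub[OF A(1)] Fsub[OF M1] by blast
  qed
  note M = M1 M2
  obtain m where m: "m \<in> M" using M(1) unfolding \<F>_def by blast
  have mx: "m \<in> R `` {x}" using m M(1) unfolding \<F>_def by blast
  have Mup: "R `` M \<subseteq> M" using M(1) unfolding \<F>_def by blast
  have "m \<in> qmax T R"
    unfolding qmax_def
  proof (intro CollectI conjI allI impI)
    show "m \<in> topspace T" using mx Rs by blast
    fix w assume w: "(m, w) \<in> R"
    have wx: "w \<in> R `` {x}" using mx w transR by blast
    have "R `` {w} \<subseteq> M" using Mup m w by blast
    then have "R `` {w} = M" using M(2) upF[OF wx] by blast
    then show "(w, m) \<in> R" using m by blast
  qed
  then show ?thesis using mx by blast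
qed

lemma qmax_sub: "qmax T R \<subseteq> topspace T"
  unfolding qmax_def by blast

lemma LK_imp_Kur:
  assumes F: "descriptive_MS4_frame T R E" and LK: "local_Kuroda T R E"
  shows "valid_in T R E Kur_ax"
proof (rule valid_intro)
  fix V :: "nat \<Rightarrow> 'a set" and x
  assume V: "\<forall>n. clopenin T (V n)" and x: "x \<in> topspace T"
  have Rs: "R \<subseteq> topspace T \<times> topspace T" using frame_R[OF F] .
  have Es: "E \<subseteq> topspace T \<times> topspace T" using frame_E[OF F] .
  have transR: "\<And>x y z. (x, y) \<in> R \<Longrightarrow> (y, z) \<in> R \<Longrightarrow> (x, z) \<in> R"
    using frame_transR[OF F] by (meson transD)
  show "x \<in> eval T R E V Kur_ax"
  proof (cases "x \<in> eval T R E V (Box (All (Dia (Box pp))))")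
    case False then show ?thesis using x unfolding Kur_ax_def by simp
  next
    case True
    obtain m where m: "(x, m) \<in> R" "m \<in> qmax T R" using fine_esakia[OF F x] by blast
    obtain y where y: "(m, y) \<in> R" "(y, m) \<in> R" "E `` {y} \<subseteq> qmax T R"
      using LK m(2) unfolding local_Kuroda_def by blast
    have xy: "(x, y) \<in> R" using m(1) y(1) transR by blast
    have yt: "y \<in> topspace T" using xy Rs by blast
    have "y \<in> eval T R E V (All pp)"
    proof -
      have "z \<in> V 0" if z: "(y, z) \<in> E" for z
      proof -
        have zq: "z \<in> qmax T R" using y(3) z by blast
        have "z \<in> eval T R E V (Dia (Box pp))" using True xy z by simp
        then obtain w where w: "(z, w) \<in> R" "w \<in> eval T R E V (Box pp)"
          unfolding eval_Dia[OF Rs] by blast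
        have "(w, z) \<in> R" using zq w(1) unfolding qmax_def by blast
        then show ?thesis using w(2) by simp
      qed
      then show ?thesis using yt by simp
    qed
    then have "x \<in> eval T R E V (Dia (All pp))" unfolding eval_Dia[OF Rs] using x xy by blast
    then show ?thesis unfolding Kur_ax_def by simp
  qed
qed

lemma nonqmax_sep:
  assumes F: "descriptive_MS4_frame T R E" and z: "z \<in> topspace T" "z \<notin> qmax T R"
  shows "\<exists>p. clopenin T p \<and> qmax T R \<subseteq> p \<and> z \<notin> p"
proof -
  have Rs: "R \<subseteq> topspace T \<times> topspace T" using frame_R[OF F] .
  obtain w where w: "(z, w) \<in> R" "(w, z) \<notin> R" using z unfolding qmax_def by blast
  have wt: "w \<in> topspace T" using w Rs by blast
  have "closedin T (R `` {w})" using frame_cR[OF F] wt unfolding continuous_rel_def by blast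
  then have "openin T (topspace T - R `` {w})" by blast
  moreover have "z \<in> topspace T - R `` {w}" using z w by blast
  ultimately obtain C where C: "clopenin T C" "z \<in> C" "C \<subseteq> topspace T - R `` {w}"
    using frame_zd[OF F] unfolding zero_dimensional_space_def by blast
  define U where "U = topspace T - C"
  have U: "clopenin T U" unfolding U_def by (rule clopen_diff[OF clopen_top C(1)])
  define V :: "nat \<Rightarrow> 'a set" where "V = (\<lambda>_. U)"
  have V: "\<And>n. clopenin T (V n)" unfolding V_def using U by simp
  define p where "p = eval T R E V (Imp (Dia (Box pp)) pp)"
  have "clopenin T p" unfolding p_def by (rule eval_clopen[OF F V])
  moreover have "qmax T R \<subseteq> p"
  proof
    fix q assume q: "q \<in> qmax T R"
    show "q \<in> p"
    proof (cases "q \<in> eval T R E V (Dia (Box pp))")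
      case True
      then obtain v where v: "(q, v) \<in> R" "v \<in> eval T R E V (Box pp)"
        unfolding eval_Dia[OF Rs] by blast
      have "(v, q) \<in> R" using q v(1) unfolding qmax_def by blast
      then have "q \<in> V 0" using v(2) by simp
      then show ?thesis unfolding p_def by simp
    next
      case False then show ?thesis unfolding p_def using q qmax_sub[of T R] by auto
    qed
  qed
  moreover have "z \<notin> p"
  proof -
    have "w \<in> eval T R E V (Box pp)" using wt C(3) Rs by (auto simp: V_def U_def)
    then have "z \<in> eval T R E V (Dia (Box pp))" unfolding eval_Dia[OF Rs] using z w by blast
    moreover have "z \<notin> V 0" using C(2) by (simp add: V_def U_def)
    ultimately show ?thesis unfolding p_def by simp
  qed
  ultimately show ?thesis by blast
qed

lemma Kur_imp_LK:
  assumes F: "descriptive_MS4_frame T R E" and K: "valid_in T R E Kur_ax"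
  shows "local_Kuroda T R E"
  unfolding local_Kuroda_def
proof
  fix x assume xq: "x \<in> qmax T R"
  have x: "x \<in> topspace T" using xq qmax_sub[of T R] by blast
  have Rs: "R \<subseteq> topspace T \<times> topspace T" using frame_R[OF F] .
  have transR: "\<And>x y z. (x, y) \<in> R \<Longrightarrow> (y, z) \<in> R \<Longrightarrow> (x, z) \<in> R"
    using frame_transR[OF F] by (meson transD)
  define \<P> where "\<P> = {p. clopenin T p \<and> qmax T R \<subseteq> p}"
  define Kp where "Kp = (\<lambda>p. R `` {x} \<inter> {y \<in> topspace T. \<forall>z. (y, z) \<in> E \<longrightarrow> z \<in> p})"
  have Kne: "Kp p \<noteq> {}" if p: "p \<in> \<P>" for p
  proof -
    define V :: "nat \<Rightarrow> 'a set" where "V = (\<lambda>_. p)"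
    have V: "\<forall>n. clopenin T (V n)" using p unfolding V_def \<P>_def by simp
    have "x \<in> eval T R E V Kur_ax" using validD[OF K V x] .
    moreover have "x \<in> eval T R E V (Box (All (Dia (Box pp))))"
    proof -
      have "z \<in> eval T R E V (Dia (Box pp))" if z: "z \<in> topspace T" for z
      proof -
        obtain m where m: "(z, m) \<in> R" "m \<in> qmax T R" using fine_esakia[OF F z] by blast
        have "m \<in> eval T R E V (Box pp)"
        proof -
          have "u \<in> p" if u: "(m, u) \<in> R" for u
          proof -
            have "u \<in> qmax T R" unfolding qmax_def
            proof (intro CollectI conjI allI impI)
              show "u \<in> topspace T" using u Rs by blast
              fix v assume "(u, v) \<in> R"
              then have "(m, v) \<in> R" using u transR by blast
              then have "(v, m) \<in> R" using m(2) unfolding qmax_def by blast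
              then show "(v, u) \<in> R" using u transR by blast
            qed
            then show ?thesis using p unfolding \<P>_def by blast
          qed
          moreover have "m \<in> topspace T" using m(1) Rs by blast
          ultimately show ?thesis by (simp add: V_def)
        qed
        then show ?thesis unfolding eval_Dia[OF Rs] using z m(1) by blast
      qed
      moreover have "\<And>y z. (x, y) \<in> R \<Longrightarrow> (y, z) \<in> E \<Longrightarrow> z \<in> topspace T"
        using frame_E[OF F] by blast
      moreover have "\<And>y. (x, y) \<in> R \<Longrightarrow> y \<in> topspace T" using Rs by blast
      ultimately show ?thesis using x by simp
    qed
    ultimately have "x \<in> eval T R E V (Dia (All pp))" unfolding Kur_ax_def by auto
    then obtain y where "(x, y) \<in> R" "y \<in> eval T R E V (All pp)"
      unfolding eval_Dia[OF Rs] by blast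
    then have "y \<in> Kp p" unfolding Kp_def by (simp add: V_def)
    then show ?thesis by blast
  qed
  have Kcl: "closedin T (Kp p)" if p: "p \<in> \<P>" for p
  proof -
    have "closedin T (R `` {x})" using frame_cR[OF F] x unfolding continuous_rel_def by blast
    moreover have "clopenin T {y \<in> topspace T. \<forall>z. (y, z) \<in> E \<longrightarrow> z \<in> p}"
      using clopen_box[OF frame_E[OF F] frame_cE[OF F]] p unfolding \<P>_def by blast
    ultimately show ?thesis unfolding Kp_def clopenin_def by blast
  qed
  have topP: "topspace T \<in> \<P>" unfolding \<P>_def using clopen_top qmax_sub[of T R] by blast
  have "\<Inter>(Kp ` \<P>) \<noteq> {}"
  proof -
    have fip: "\<Inter>\<F> \<noteq> {}" if fin: "finite \<F>" and sub: "\<F> \<subseteq> Kp ` \<P>" for \<F>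
    proof -
      obtain \<P>0 where P0: "\<P>0 \<subseteq> \<P>" "finite \<P>0" "\<F> = Kp ` \<P>0"
        using finite_subset_image[OF fin sub] by blast
      define p0 where "p0 = \<Inter>(insert (topspace T) \<P>0)"
      have "clopenin T p0"
      proof -
        have "\<forall>q\<in>insert (topspace T) \<P>0. openin T q \<and> closedin T q"
          using P0(1) topP unfolding \<P>_def clopenin_def by blast
        then show ?thesis unfolding p0_def clopenin_def using P0(2)
          by (intro conjI openin_Inter closedin_Inter) auto
      qed
      moreover have "qmax T R \<subseteq> p0"
        unfolding p0_def using P0(1) qmax_sub[of T R] unfolding \<P>_def by blast
      ultimately have "p0 \<in> \<P>" unfolding \<P>_def by blast
      then have "Kp p0 \<noteq> {}" by (rule Kne)
      moreover have "Kp p0 \<subseteq> \<Inter>\<F>"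
        unfolding P0(3) Kp_def p0_def by blast
      ultimately show ?thesis by blast
    qed
    have P: "(\<forall>C\<in>Kp ` \<P>. closedin T C) \<and> (\<forall>\<F>. finite \<F> \<and> \<F> \<subseteq> Kp ` \<P> \<longrightarrow> \<Inter>\<F> \<noteq> {})"
      using Kcl fip by blast
    have "compact_space T" using frame_compact[OF F] .
    then have "\<forall>\<U>. (\<forall>C\<in>\<U>. closedin T C) \<and> (\<forall>\<F>. finite \<F> \<and> \<F> \<subseteq> \<U> \<longrightarrow> \<Inter>\<F> \<noteq> {}) \<longrightarrow> \<Inter>\<U> \<noteq> {}"
      unfolding compact_space_fip .
    then show ?thesis using P by (elim allE[of _ "Kp ` \<P>"]) (rule mp)
  qed
  then obtain y where y: "\<And>p. p \<in> \<P> \<Longrightarrow> y \<in> Kp p" by blast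
  have xy: "(x, y) \<in> R" using y[OF topP] unfolding Kp_def by blast
  have yx: "(y, x) \<in> R" using xq xy unfolding qmax_def by blast
  have "E `` {y} \<subseteq> qmax T R"
  proof
    fix z assume "z \<in> E `` {y}"
    then have z: "(y, z) \<in> E" by blast
    have zt: "z \<in> topspace T" using z frame_E[OF F] by blast
    show "z \<in> qmax T R"
    proof (rule ccontr)
      assume "z \<notin> qmax T R"
      then obtain p where "clopenin T p" "qmax T R \<subseteq> p" "z \<notin> p"
        using nonqmax_sep[OF F zt] by blast
      then have "p \<in> \<P>" unfolding \<P>_def by blast
      then have "y \<in> Kp p" by (rule y)
      then show False using z \<open>z \<notin> p\<close> unfolding Kp_def by blast
    qed
  qed
  then show "\<exists>y. (x, y) \<in> R \<and> (y, x) \<in> R \<and> E `` {y} \<subseteq> qmax T R" using xy yx by blast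
qed

theorem theorem4p12:
  fixes T :: "'a topology" and R E :: "'a rel"
  assumes "descriptive_MS4_frame T R E"
  shows "validates T R E LKur \<longleftrightarrow> local_Kuroda T R E"
proof
  assume "validates T R E LKur"
  moreover have "Kur_ax \<in> LKur" unfolding LKur_def by (rule MS4_ext.extra) simp
  ultimately have "valid_in T R E Kur_ax" unfolding validates_def by blast
  then show "local_Kuroda T R E" by (rule Kur_imp_LK[OF assms])
next
  assume "local_Kuroda T R E"
  then have K: "valid_in T R E Kur_ax" by (rule LK_imp_Kur[OF assms])
  show "validates T R E LKur" unfolding validates_def LKur_def
  proof
    fix p assume "p \<in> MS4_ext {Kur_ax}"
    then show "valid_in T R E p" using sound[OF assms] K by blast
  qed
qed

end
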